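(* Consider smoothed MaxSat/1-Flip on a CNF formula with $n$ variables and $m$ clauses, where each clause weight $w_i$ is drawn independently from a distribution with density $f_i:[0,1]\to[0,\phi]$, and let $B$ be the maximum number of distinct clauses in which any variable occurs. Then the expected maximum number of iterations of local search (over all initial assignments and all improving sequences) is $O(2^B n m^2\phi)$.
   Context: MaxSat/$k$-Flip: given a CNF formula with clauses $C_1,\dots,C_m$ over Boolean variables $x_1,\dots,x_n$ and clause weights $w_1,\dots,w_m$, the weight of a truth assignment is the total weight of satisfied clauses; the $k$-Flip neighbours of an assignment are those obtained by changing the truth value of at most $k$ variables; a solution is an assignment with no neighbour of strictly larger weight. Local search repeatedly moves to a strictly better neighbour. *)

theory Defs
  imports "HOL-Probability.Probability"
begin

text \<open>Literals are pairs (x, b): variable x with polarity b; the literal is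
 true under assignment a iff a x = b.\<close>

type_synonym clause = "(nat \<times> bool) set"
type_synonym cnf = "clause list"

definition clause_sat :: "clause \<Rightarrow> (nat \<Rightarrow> bool) \<Rightarrow> bool" where
  "clause_sat C a \<longleftrightarrow> (\<exists>(x, b) \<in> C. a x = b)"

definition cnf_weight :: "cnf \<Rightarrow> (nat \<Rightarrow> real) \<Rightarrow> (nat \<Rightarrow> bool) \<Rightarrow> real" where
  "cnf_weight F w a = (\<Sum>i<length F. if clause_sat (F ! i) a then w i else 0)"

definition valid_assign :: "nat \<Rightarrow> (nat \<Rightarrow> bool) \<Rightarrow> bool" where
  "valid_assign n a \<longleftrightarrow> (\<forall>x\<ge>n. \<not> a x)"

definition kflip_nbr :: "nat \<Rightarrow> nat \<Rightarrow> (nat \<Rightarrow> bool) \<Rightarrow> (nat \<Rightarrow> bool) \<Rightarrow> bool" where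
  "kflip_nbr k n a b \<longleftrightarrow> valid_assign n a \<and> valid_assign n b \<and>
     card {x \<in> {..<n}. a x \<noteq> b x} \<le> k"

definition improving_seq ::
  "nat \<Rightarrow> nat \<Rightarrow> cnf \<Rightarrow> (nat \<Rightarrow> real) \<Rightarrow> (nat \<Rightarrow> bool) list \<Rightarrow> bool" where
  "improving_seq k n F w as \<longleftrightarrow> as \<noteq> [] \<and> (\<forall>a \<in> set as. valid_assign n a) \<and>
     (\<forall>j. Suc j < length as \<longrightarrow>
        kflip_nbr k n (as ! j) (as ! Suc j) \<and>
        cnf_weight F w (as ! j) < cnf_weight F w (as ! Suc j))"

definition max_iter :: "nat \<Rightarrow> nat \<Rightarrow> cnf \<Rightarrow> (nat \<Rightarrow> real) \<Rightarrow> nat" where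
  "max_iter k n F w = Sup {length as - 1 | as. improving_seq k n F w as}"

definition max_occ :: "nat \<Rightarrow> cnf \<Rightarrow> nat" where
  "max_occ n F = Sup ((\<lambda>x. card {C \<in> set F. \<exists>b. (x, b) \<in> C}) ` {..<n})"

definition smoothed_density :: "real \<Rightarrow> (real \<Rightarrow> real) \<Rightarrow> bool" where
  "smoothed_density \<phi> f \<longleftrightarrow> f \<in> borel_measurable borel \<and>
     (\<forall>x. 0 \<le> f x \<and> f x \<le> \<phi>) \<and> (\<forall>x. x \<notin> {0..1} \<longrightarrow> f x = 0) \<and>
     (\<integral>\<^sup>+ x. ennreal (f x) \<partial>lborel) = 1"

end

theory Submission
  imports Defs
begin


definition coef :: "cnf \<Rightarrow> nat \<Rightarrow> (nat \<Rightarrow> bool) \<Rightarrow> nat \<Rightarrow> real" where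
  "coef F x a i = (if i < length F then
     (if clause_sat (F!i) (a(x := \<not> a x)) then 1 else 0) - (if clause_sat (F!i) a then 1 else 0) else 0)"

definition Kset :: "nat \<Rightarrow> cnf \<Rightarrow> (nat \<Rightarrow> real) set" where
  "Kset n F = {coef F x a | x a. x < n \<and> valid_assign n a}"

definition dot :: "cnf \<Rightarrow> (nat \<Rightarrow> real) \<Rightarrow> (nat \<Rightarrow> real) \<Rightarrow> real" where
  "dot F c w = (\<Sum>i<length F. c i * w i)"

lemma weight_diff:
  "cnf_weight F w (a(x := \<not> a x)) - cnf_weight F w a = dot F (coef F x a) w"
  unfolding cnf_weight_def dot_def coef_def
  by (auto simp: sum_subtractf[symmetric] algebra_simps intro!: sum.cong)

lemma step_flip:
  assumes "kflip_nbr 1 n a b" "a \<noteq> b"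
  shows "\<exists>x<n. b = a(x := \<not> a x)"
proof -
  have va: "valid_assign n a" and vb: "valid_assign n b" and c: "card {x \<in> {..<n}. a x \<noteq> b x} \<le> 1"
    using assms(1) unfolding kflip_nbr_def by auto
  obtain y where y: "a y \<noteq> b y" using assms(2) by auto
  have yn: "y < n" using y va vb unfolding valid_assign_def by (metis not_le)
  have fin: "finite {x \<in> {..<n}. a x \<noteq> b x}" by auto
  have "{x \<in> {..<n}. a x \<noteq> b x} = {y}"
  proof -
    have "y \<in> {x \<in> {..<n}. a x \<noteq> b x}" using y yn by auto
    moreover have "\<forall>u\<in>{x \<in> {..<n}. a x \<noteq> b x}. \<forall>v\<in>{x \<in> {..<n}. a x \<noteq> b x}. u = v"
      using c fin card_le_Suc0_iff_eq[OF fin] by simp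
    ultimately show ?thesis by blast
  qed
  note S = this
  have "b z = (a(y := \<not> a y)) z" for z
  proof (cases "z = y")
    case True then show ?thesis using y by auto
  next
    case False
    have "a z = b z"
    proof (rule ccontr)
      assume h: "a z \<noteq> b z"
      have "z < n" using h va vb unfolding valid_assign_def by (metis not_le)
      then have "z \<in> {x \<in> {..<n}. a x \<noteq> b x}" using h by auto
      then show False using S False by auto
    qed
    then show ?thesis using False by auto
  qed
  then have "b = a(y := \<not> a y)" by auto
  then show ?thesis using yn by auto
qed

lemma seq_incr:
  assumes "\<forall>j. Suc j < length as \<longrightarrow> g (as ! j) < (g (as ! Suc j) :: real)"
  shows "j < k \<Longrightarrow> k < length as \<Longrightarrow> g (as ! j) < g (as ! k)"
proof (induction k)
  case 0 then show ?case by simp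
next
  case (Suc k)
  show ?case
  proof (cases "j = k")
    case True then show ?thesis using assms Suc.prems by auto
  next
    case False
    then have "g (as ! j) < g (as ! k)" using Suc by auto
    also have "\<dots> < g (as ! Suc k)" using assms Suc.prems by auto
    finally show ?thesis .
  qed
qed

definition pat :: "cnf \<Rightarrow> (nat \<Rightarrow> bool) \<Rightarrow> nat set" where
  "pat F a = {i \<in> {..<length F}. clause_sat (F!i) a}"

lemma weight_pat: "pat F a = pat F b \<Longrightarrow> cnf_weight F w a = cnf_weight F w b"
  unfolding cnf_weight_def pat_def
  by (intro sum.cong refl) (auto simp: set_eq_iff)

lemma improving_len:
  assumes "improving_seq k n F w as"
  shows "length as \<le> 2 ^ length F"
proof -
  have st: "\<forall>j. Suc j < length as \<longrightarrow> cnf_weight F w (as ! j) < cnf_weight F w (as ! Suc j)"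
    using assms unfolding improving_seq_def by auto
  have "distinct (map (pat F) as)"
    unfolding distinct_conv_nth
  proof (intro allI impI)
    fix i j assume h: "i < length (map (pat F) as)" "j < length (map (pat F) as)" "i \<noteq> j"
    show "map (pat F) as ! i \<noteq> map (pat F) as ! j"
    proof
      assume e: "map (pat F) as ! i = map (pat F) as ! j"
      then have "pat F (as ! i) = pat F (as ! j)" using h by simp
      then have eq: "cnf_weight F w (as ! i) = cnf_weight F w (as ! j)" by (rule weight_pat)
      show False
      proof (cases "i < j")
        case True then show False using seq_incr[OF st, of i j] h eq by auto
      next
        case False then have "j < i" using h by auto
        then show False using seq_incr[OF st, of j i] h eq by auto
      qed
    qed
  qed
  then have "length as = card (set (map (pat F) as))"
    using distinct_card by fastforce
  also have "\<dots> \<le> card (Pow {..<length F})"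
    by (rule card_mono) (auto simp: pat_def)
  also have "\<dots> = 2 ^ length F" by (simp add: card_Pow)
  finally show ?thesis .
qed

lemma max_iter_props:
  "max_iter k n F w \<le> 2 ^ length F \<and>
   (\<exists>as. improving_seq k n F w as \<and> length as - 1 = max_iter k n F w)"
proof -
  define S where "S = {length as - 1 | as. improving_seq k n F w as}"
  have sub: "S \<subseteq> {..2 ^ length F}" unfolding S_def using improving_len by fastforce
  then have fin: "finite S" using finite_subset by blast
  have "improving_seq k n F w [\<lambda>_. False]"
    unfolding improving_seq_def valid_assign_def by auto
  then have ne: "S \<noteq> {}" unfolding S_def by blast
  have "Sup S \<in> S" using fin ne by (simp add: cSup_eq_Max)
  then show ?thesis using sub unfolding max_iter_def S_def[symmetric] by (auto simp: S_def)
qed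

lemma weight_bounds:
  assumes "\<forall>i<length F. 0 \<le> w i \<and> w i \<le> 1"
  shows "0 \<le> cnf_weight F w a \<and> cnf_weight F w a \<le> real (length F)"
proof
  show "0 \<le> cnf_weight F w a" unfolding cnf_weight_def using assms by (auto intro: sum_nonneg)
  have "cnf_weight F w a \<le> (\<Sum>i<length F. 1)" unfolding cnf_weight_def using assms
    by (intro sum_mono) auto
  then show "cnf_weight F w a \<le> real (length F)" by simp
qed

lemma key:
  assumes w01: "\<forall>i<length F. 0 \<le> w i \<and> w i \<le> 1"
    and t: "1 \<le> t" "t \<le> max_iter 1 n F w"
  shows "\<exists>c\<in>Kset n F. 0 < dot F c w \<and> dot F c w \<le> real (length F) / real t"
proof -
  obtain as where imp: "improving_seq 1 n F w as" and len: "length as - 1 = max_iter 1 n F w"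
    using max_iter_props by blast
  define r where "r = length as - 1"
  define W where "W = cnf_weight F w"
  have ne: "as \<noteq> []" and va: "\<forall>a\<in>set as. valid_assign n a"
   and st: "\<And>j. Suc j < length as \<Longrightarrow> kflip_nbr 1 n (as ! j) (as ! Suc j) \<and> W (as ! j) < W (as ! Suc j)"
    using imp unfolding improving_seq_def W_def by auto
  have rt: "t \<le> r" using t len r_def by simp
  have lr: "Suc j < length as \<longleftrightarrow> j < r" for j using ne r_def by (cases as) auto
  have dj: "\<exists>c\<in>Kset n F. dot F c w = W (as ! Suc j) - W (as ! j)" if j: "j < r" for j
  proof -
    have s: "kflip_nbr 1 n (as ! j) (as ! Suc j)" "W (as ! j) < W (as ! Suc j)" using st lr j by auto
    then have "as ! j \<noteq> as ! Suc j" by auto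
    then obtain x where x: "x < n" "as ! Suc j = (as ! j)(x := \<not> (as ! j) x)" using step_flip s(1) by blast
    have "valid_assign n (as ! j)" using va j lr nth_mem by (metis Suc_lessD)
    then have "coef F x (as ! j) \<in> Kset n F" using x unfolding Kset_def by blast
    moreover have "dot F (coef F x (as ! j)) w = W (as ! Suc j) - W (as ! j)"
      using weight_diff x unfolding W_def by metis
    ultimately show ?thesis by blast
  qed
  show ?thesis
  proof (rule ccontr)
    assume "\<not> ?thesis"
    then have big: "W (as ! Suc j) - W (as ! j) > real (length F) / real t" if "j < r" for j
      using dj[OF that] st[of j] lr[of j] that by force
    have "real r * (real (length F) / real t) = (\<Sum>j<r. real (length F) / real t)" by simp
    also have "\<dots> < (\<Sum>j<r. W (as ! Suc j) - W (as ! j))"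
    proof (rule sum_strict_mono)
      have "(0::nat) \<in> {..<r}" using rt t by simp
      then show "{..<r} \<noteq> {}" by blast
    qed (auto intro: big)
    also have "\<dots> = W (as ! r) - W (as ! 0)" by (rule sum_lessThan_telescope)
    also have "\<dots> \<le> real (length F)" using weight_bounds[OF w01] unfolding W_def
      by (smt (verit))
    finally have "real r * (real (length F) / real t) < real (length F)" .
    moreover have "real (length F) \<le> real r * (real (length F) / real t)"
    proof -
      have "real (length F) = real t * (real (length F) / real t)" using t by simp
      also have "\<dots> \<le> real r * (real (length F) / real t)"
        using rt by (intro mult_right_mono) auto
      finally show ?thesis .
    qed
    ultimately show False by simp
  qed
qed

definition Cx :: "cnf \<Rightarrow> nat \<Rightarrow> clause set" where
  "Cx F x = {C \<in> set F. \<exists>b. (x, b) \<in> C}"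

definition G :: "cnf \<Rightarrow> nat \<Rightarrow> bool \<times> clause set \<Rightarrow> nat \<Rightarrow> real" where
  "G F x p i = (if i < length F then
     (if F!i \<in> snd p \<or> (x, \<not> fst p) \<in> F!i then 1 else 0) -
     (if F!i \<in> snd p \<or> (x, fst p) \<in> F!i then 1 else 0) else 0)"

lemma sat_upd: "clause_sat C (a(x := v)) \<longleftrightarrow> (\<exists>(y, b) \<in> C. y \<noteq> x \<and> a y = b) \<or> (x, v) \<in> C"
proof
  assume "clause_sat C (a(x := v))"
  then obtain y b where yb: "(y, b) \<in> C" "(a(x := v)) y = b" unfolding clause_sat_def by blast
  show "(\<exists>(y, b) \<in> C. y \<noteq> x \<and> a y = b) \<or> (x, v) \<in> C"
  proof (cases "y = x")
    case True then have "b = v" using yb by simp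
    then show ?thesis using yb True by simp
  next
    case False then have "a y = b" using yb by simp
    then show ?thesis using yb False by (intro disjI1 bexI[of _ "(y,b)"]) auto
  qed
next
  assume h: "(\<exists>(y, b) \<in> C. y \<noteq> x \<and> a y = b) \<or> (x, v) \<in> C"
  show "clause_sat C (a(x := v))" unfolding clause_sat_def
  proof (cases "(x, v) \<in> C")
    case True then show "\<exists>(y, b) \<in> C. (a(x := v)) y = b" by (intro bexI[of _ "(x, v)"]) auto
  next
    case False
    then obtain y b where "(y, b) \<in> C" "y \<noteq> x" "a y = b" using h by auto
    then show "\<exists>(y, b) \<in> C. (a(x := v)) y = b" by (intro bexI[of _ "(y, b)"]) auto
  qed
qed

lemma coef_G:
  "coef F x a = G F x (a x, {C \<in> Cx F x. \<exists>(y, b) \<in> C. y \<noteq> x \<and> a y = b})"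
proof
  fix i
  show "coef F x a i = G F x (a x, {C \<in> Cx F x. \<exists>(y, b) \<in> C. y \<noteq> x \<and> a y = b}) i"
  proof (cases "i < length F")
    case True
    define C where "C = F ! i"
    have CF: "C \<in> set F" using True C_def by simp
    have s1: "clause_sat C a \<longleftrightarrow> (\<exists>(y, b) \<in> C. y \<noteq> x \<and> a y = b) \<or> (x, a x) \<in> C"
      using sat_upd[of C a x "a x"] by simp
    have s2: "clause_sat C (a(x := \<not> a x)) \<longleftrightarrow> (\<exists>(y, b) \<in> C. y \<noteq> x \<and> a y = b) \<or> (x, \<not> a x) \<in> C"
      by (rule sat_upd)
    show ?thesis
    proof (cases "C \<in> Cx F x")
      case True
      then show ?thesis using \<open>i < length F\<close> s1 s2 unfolding coef_def G_def C_def[symmetric]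
        by auto
    next
      case False
      then have "(x, v) \<notin> C" for v using CF unfolding Cx_def by auto
      then show ?thesis using \<open>i < length F\<close> s1 s2 False unfolding coef_def G_def C_def[symmetric]
        by auto
    qed
  qed (simp add: coef_def G_def)
qed

lemma card_Cx: "x < n \<Longrightarrow> card (Cx F x) \<le> max_occ n F"
  unfolding max_occ_def Cx_def by (rule le_cSup_finite) auto

lemma Kset_card:
  "finite (Kset n F) \<and> card (Kset n F) \<le> 2 * 2 ^ max_occ n F * n"
proof -
  have sub: "Kset n F \<subseteq> (\<Union>x\<in>{..<n}. G F x ` (UNIV \<times> Pow (Cx F x)))"
  proof
    fix c assume "c \<in> Kset n F"
    then obtain x a where "c = coef F x a" "x < n" unfolding Kset_def by blast
    then show "c \<in> (\<Union>x\<in>{..<n}. G F x ` (UNIV \<times> Pow (Cx F x)))"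
      by (subst (asm) coef_G) auto
  qed
  have finC: "finite (Cx F x)" for x unfolding Cx_def by auto
  have fin: "finite (\<Union>x\<in>{..<n}. G F x ` (UNIV \<times> Pow (Cx F x)))"
    using finC by auto
  have "card (Kset n F) \<le> card (\<Union>x\<in>{..<n}. G F x ` (UNIV \<times> Pow (Cx F x)))"
    by (rule card_mono[OF fin sub])
  also have "\<dots> \<le> (\<Sum>x<n. card (G F x ` (UNIV \<times> Pow (Cx F x))))"
    by (rule card_UN_le) simp
  also have "\<dots> \<le> (\<Sum>x<n. 2 * 2 ^ max_occ n F)"
  proof (rule sum_mono)
    fix x assume x: "x \<in> {..<n}"
    have "card (G F x ` (UNIV \<times> Pow (Cx F x))) \<le> card (UNIV \<times> Pow (Cx F x) :: (bool \<times> clause set) set)"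
      by (rule card_image_le) (simp add: finC)
    also have "\<dots> = 2 * 2 ^ card (Cx F x)"
      by (simp add: card_cartesian_product card_Pow finC)
    also have "\<dots> \<le> 2 * 2 ^ max_occ n F"
      using card_Cx[of x n F] x by simp
    finally show "card (G F x ` (UNIV \<times> Pow (Cx F x))) \<le> 2 * 2 ^ max_occ n F" .
  qed
  also have "\<dots> = 2 * 2 ^ max_occ n F * n" by simp
  finally show ?thesis using finite_subset[OF sub fin] by simp
qed

lemma coef_vals: "coef F x a i = 0 \<or> coef F x a i = 1 \<or> coef F x a i = -1"
  unfolding coef_def by auto



lemma harm_dyadic: "(\<Sum>t\<in>{1..(2::nat)^k}. 1 / real t) \<le> real k + 1"
proof (induction k)
  case 0 then show ?case by simp
next
  case (Suc k)
  have "(\<Sum>t\<in>{1..(2::nat)^Suc k}. 1 / real t) = (\<Sum>t\<in>{1..2^k + 2^k}. 1 / real t)" by (simp add: mult_2)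
  also have "\<dots> = (\<Sum>t\<in>{1..2^k}. 1 / real t) + (\<Sum>t\<in>{2^k+1..2^k + 2^k}. 1 / real t)"
    by (rule sum.ub_add_nat) simp
  also have "(\<Sum>t\<in>{2^k+1..(2::nat)^k + 2^k}. 1 / real t) \<le> real (card {2^k+1..(2::nat)^k + 2^k}) * (1 / 2^k)"
  proof (rule sum_bounded_above)
    fix t assume "t \<in> {2^k+1..(2::nat)^k + 2^k}"
    then have "real (2^k) \<le> real t" by simp
    then show "1 / real t \<le> 1 / 2 ^ k" by (simp add: frac_le)
  qed
  also have "\<dots> = 1" by simp
  finally show ?case using Suc.IH by simp
qed

context
  fixes f :: "nat \<Rightarrow> real \<Rightarrow> real" and \<phi> :: real and m :: nat
  assumes dens: "\<forall>i<m. smoothed_density \<phi> (f i)"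
begin

definition MM :: "nat \<Rightarrow> real measure" where
  "MM i = density lborel (\<lambda>x. ennreal (f i x))"

lemma f_meas: "i < m \<Longrightarrow> (\<lambda>x. ennreal (f i x)) \<in> borel_measurable lborel"
  using dens unfolding smoothed_density_def by (auto simp: measurable_lborel1)

lemma MM_prob: "i < m \<Longrightarrow> prob_space (MM i)"
proof -
  assume i: "i < m"
  have "emeasure (MM i) (space (MM i)) = (\<integral>\<^sup>+ x. ennreal (f i x) \<partial>lborel)"
    unfolding MM_def using f_meas[OF i] by (simp add: emeasure_density)
  also have "\<dots> = 1" using dens i unfolding smoothed_density_def by auto
  finally show ?thesis by (rule prob_spaceI)
qed

lemma MM_Icc: assumes i: "i < m" and ab: "a \<le> b"
  shows "emeasure (MM i) {a..b} \<le> ennreal (\<phi> * (b - a))"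
proof -
  have "emeasure (MM i) {a..b} = (\<integral>\<^sup>+ x. ennreal (f i x) * indicator {a..b} x \<partial>lborel)"
    unfolding MM_def using f_meas[OF i] by (simp add: emeasure_density)
  also have "\<dots> \<le> (\<integral>\<^sup>+ x. ennreal \<phi> * indicator {a..b} x \<partial>lborel)"
    using dens i unfolding smoothed_density_def
    by (intro nn_integral_mono) (auto split: split_indicator intro: ennreal_leI)
  also have "\<dots> = ennreal \<phi> * ennreal (b - a)"
    using ab by (simp add: nn_integral_cmult_indicator)
  also have "\<dots> = ennreal (\<phi> * (b - a))"
  proof (cases "\<phi> \<ge> 0")
    case True then show ?thesis using ab by (simp add: ennreal_mult)
  next
    case False then show ?thesis using ab
      by (simp add: ennreal_neg mult_nonpos_nonneg)
  qed
  finally show ?thesis .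
qed

lemma prod_bound:
  assumes j: "j < m" and cj: "c j = 1 \<or> c j = -1" and e: "0 \<le> \<epsilon>"
  shows "emeasure (PiM {..<m} MM) {w \<in> space (PiM {..<m} MM). 0 < (\<Sum>i<m. c i * w i) \<and> (\<Sum>i<m. c i * w i) \<le> \<epsilon>}
           \<le> ennreal (\<phi> * \<epsilon>)"
proof -
  define M' where "M' i = (if i < m then MM i else lborel)" for i
  have PM: "PiM {..<m} MM = PiM {..<m} M'" by (rule PiM_cong) (auto simp: M'_def)
  have sf: "sigma_finite_measure (M' i)" for i
      using MM_prob prob_space_imp_sigma_finite unfolding M'_def
      by (cases "i < m") (auto intro: lborel.sigma_finite_measure_axioms)
  interpret product_sigma_finite M'
    by (rule product_sigma_finite.intro) (rule sf)
  define I0 where "I0 = {..<m} - {j}"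
  have ins: "{..<m} = insert j I0" using j unfolding I0_def by auto
  have jI0: "j \<notin> I0" "finite I0" unfolding I0_def by auto
  define A where "A = {w \<in> space (PiM {..<m} M'). 0 < (\<Sum>i<m. c i * w i) \<and> (\<Sum>i<m. c i * w i) \<le> \<epsilon>}"
  have setsM': "sets (M' i) = sets borel" for i by (simp add: M'_def MM_def)
  have comp: "(\<lambda>w. w i) \<in> borel_measurable (PiM {..<m} M')" if "i < m" for i
    using measurable_component_singleton[of i "{..<m}" M'] that
    by (simp add: measurable_cong_sets[OF refl setsM'])
  have gm: "(\<lambda>w. \<Sum>i<m. c i * w i) \<in> borel_measurable (PiM {..<m} M')"
    using comp by (intro borel_measurable_sum borel_measurable_times borel_measurable_const) auto
  have "A = (\<lambda>w. \<Sum>i<m. c i * w i) -` {0<..\<epsilon>} \<inter> space (PiM {..<m} M')"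
    unfolding A_def by auto
  then have Ameas: "A \<in> sets (PiM {..<m} M')"
    using measurable_sets[OF gm, of "{0<..\<epsilon>}"] by simp
  have "emeasure (PiM {..<m} M') A = (\<integral>\<^sup>+ w. indicator A w \<partial>PiM {..<m} M')"
    using Ameas by simp
  also have "\<dots> = (\<integral>\<^sup>+ x. (\<integral>\<^sup>+ y. indicator A (x(j := y)) \<partial>M' j) \<partial>PiM I0 M')"
    unfolding ins using Ameas unfolding ins
    by (intro product_nn_integral_insert jI0) simp
  also have "\<dots> \<le> (\<integral>\<^sup>+ x. ennreal (\<phi> * \<epsilon>) \<partial>PiM I0 M')"
  proof (rule nn_integral_mono)
    fix x assume x: "x \<in> space (PiM I0 M')"
    define r where "r = (\<Sum>i\<in>I0. c i * x i)"
    define a where "a = (if c j = 1 then - r else r - \<epsilon>)"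
    have sumeq: "(\<Sum>i<m. c i * (x(j := y)) i) = c j * y + r" for y
    proof -
      have "(\<Sum>i<m. c i * (x(j := y)) i) = c j * (x(j := y)) j + (\<Sum>i\<in>I0. c i * (x(j := y)) i)"
        unfolding ins using jI0 by (simp add: sum.insert)
      also have "(\<Sum>i\<in>I0. c i * (x(j := y)) i) = r"
        unfolding r_def using jI0 by (intro sum.cong) auto
      finally show ?thesis by simp
    qed
    have "(\<integral>\<^sup>+ y. indicator A (x(j := y)) \<partial>M' j) \<le> (\<integral>\<^sup>+ y. indicator {a..a+\<epsilon>} y \<partial>M' j)"
    proof (rule nn_integral_mono)
      fix y
      show "indicator A (x(j := y)) \<le> (indicator {a..a+\<epsilon>} y :: ennreal)"
      proof (cases "x(j := y) \<in> A")
        case True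
        then have "0 < c j * y + r" "c j * y + r \<le> \<epsilon>" unfolding A_def using sumeq by auto
        then have "y \<in> {a..a+\<epsilon>}" using cj unfolding a_def by auto
        then show ?thesis using True by simp
      qed simp
    qed
    also have "\<dots> = emeasure (MM j) {a..a+\<epsilon>}" using j
      by (simp add: M'_def) (rule nn_integral_indicator, simp add: MM_def)
    also have "\<dots> \<le> ennreal (\<phi> * (a + \<epsilon> - a))" using e by (intro MM_Icc j) simp
    finally show "(\<integral>\<^sup>+ y. indicator A (x(j := y)) \<partial>M' j) \<le> ennreal (\<phi> * \<epsilon>)" by simp
  qed
  also have "\<dots> = ennreal (\<phi> * \<epsilon>)"
  proof -
    have "prob_space (PiM I0 M')"
      by (rule prob_space_PiM) (auto simp: M'_def I0_def intro: MM_prob)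
    then show ?thesis by (simp add: prob_space.emeasure_space_1)
  qed
  finally show ?thesis unfolding PM A_def .
qed

lemma meas_set:
  "{w \<in> space (PiM {..<m} MM). 0 < (\<Sum>i<m. c i * w i) \<and> (\<Sum>i<m. c i * w i) \<le> \<epsilon>} \<in> sets (PiM {..<m} MM)"
proof -
  have setsM': "sets (MM i) = sets borel" for i by (simp add: MM_def)
  have comp: "(\<lambda>w. w i) \<in> borel_measurable (PiM {..<m} MM)" if "i < m" for i
    using measurable_component_singleton[of i "{..<m}" MM] that
    by (simp add: measurable_cong_sets[OF refl setsM'])
  have gm: "(\<lambda>w. \<Sum>i<m. c i * w i) \<in> borel_measurable (PiM {..<m} MM)"
    using comp by (intro borel_measurable_sum borel_measurable_times borel_measurable_const) auto
  have "{w \<in> space (PiM {..<m} MM). 0 < (\<Sum>i<m. c i * w i) \<and> (\<Sum>i<m. c i * w i) \<le> \<epsilon>}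
     = (\<lambda>w. \<Sum>i<m. c i * w i) -` {0<..\<epsilon>} \<inter> space (PiM {..<m} MM)"
    by auto
  then show ?thesis
    using measurable_sets[OF gm, of "{0<..\<epsilon>}"] by simp
qed

lemma AE01: "AE w in PiM {..<m} MM. \<forall>i\<in>{..<m}. w i \<in> {0..1}"
proof (rule AE_finite_allI)
  fix i assume i: "i \<in> {..<m}"
  have "AE x in MM i. x \<in> {0..1}"
    unfolding MM_def
  proof (subst AE_density[OF f_meas])
    show "i < m" using i by simp
    show "AE x in lborel. 0 < ennreal (f i x) \<longrightarrow> x \<in> {0..1}"
    proof (rule AE_I2, rule impI, rule ccontr)
      fix x assume "0 < ennreal (f i x)" "x \<notin> {0..1}"
      then show False using dens i unfolding smoothed_density_def by auto
    qed
  qed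
  then show "AE w in PiM {..<m} MM. w i \<in> {0..1}"
    using i by (intro AE_PiM_component[where P="\<lambda>x. x \<in> {0..1}"] MM_prob) auto
qed simp

lemma main_bound:
  assumes lenF: "length F = m"
  shows "(\<integral>\<^sup>+ w. ennreal (real (max_iter 1 n F w)) \<partial>PiM {..<m} MM)
           \<le> ennreal (4 * 2 ^ max_occ n F * real n * real m ^ 2 * \<phi>)"
proof (cases "m = 0")
  case True
  have "max_iter 1 n F w = 0" for w
  proof (rule ccontr)
    assume "max_iter 1 n F w \<noteq> 0"
    then obtain c where "c \<in> Kset n F" "0 < dot F c w" "dot F c w \<le> real (length F) / real 1"
      using key[of F w 1 n] True lenF by auto
    then show False using True lenF by (simp add: dot_def)
  qed
  then show ?thesis by simp
next
  case False
  then have mpos: "m > 0" by simp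
  have phi: "0 \<le> \<phi>" using dens mpos unfolding smoothed_density_def by (meson order_trans)
  define P where "P = PiM {..<m} MM"
  define K where "K = Kset n F"
  define T where "T = (2::nat) ^ m"
  define E where "E t = (\<Union>c\<in>K. {w \<in> space P. 0 < (\<Sum>i<m. c i * w i) \<and> (\<Sum>i<m. c i * w i) \<le> real m / real t})" for t :: nat
  have finK: "finite K" and cardK: "card K \<le> 2 * 2 ^ max_occ n F * n"
    using Kset_card unfolding K_def by auto
  have Emeas: "E t \<in> sets P" for t
    unfolding E_def P_def using finK meas_set by (intro sets.finite_UN) auto
  have Ebound: "emeasure P (E t) \<le> of_nat (card K) * ennreal (\<phi> * (real m / real t))" for t
  proof -
    have "emeasure P (E t) \<le> (\<Sum>c\<in>K. emeasure P {w \<in> space P. 0 < (\<Sum>i<m. c i * w i) \<and> (\<Sum>i<m. c i * w i) \<le> real m / real t})"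
      unfolding E_def using finK meas_set unfolding P_def by (intro emeasure_subadditive_finite) auto
    also have "\<dots> \<le> (\<Sum>c\<in>K. ennreal (\<phi> * (real m / real t)))"
    proof (rule sum_mono)
      fix c assume "c \<in> K"
      then obtain x a where c: "c = coef F x a" unfolding K_def Kset_def by blast
      show "emeasure P {w \<in> space P. 0 < (\<Sum>i<m. c i * w i) \<and> (\<Sum>i<m. c i * w i) \<le> real m / real t}
              \<le> ennreal (\<phi> * (real m / real t))"
      proof (cases "\<exists>j<m. c j \<noteq> 0")
        case True
        then obtain j where j: "j < m" "c j \<noteq> 0" by blast
        then have "c j = 1 \<or> c j = -1" using coef_vals[of F x a j] c by auto
        then show ?thesis unfolding P_def using j by (intro prod_bound) auto
      next
        case False
        then have "{w \<in> space P. 0 < (\<Sum>i<m. c i * w i) \<and> (\<Sum>i<m. c i * w i) \<le> real m / real t} = {}"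
          by auto
        note eq = this
        show ?thesis by (subst eq) simp
      qed
    qed
    also have "\<dots> = of_nat (card K) * ennreal (\<phi> * (real m / real t))" by simp
    finally show ?thesis .
  qed
  have pw: "ennreal (real (max_iter 1 n F w)) \<le> (\<Sum>t\<in>{1..T}. indicator (E t) w)"
    if w: "w \<in> space P" "\<forall>i\<in>{..<m}. w i \<in> {0..1}" for w
  proof -
    define X where "X = max_iter 1 n F w"
    have XT: "X \<le> T" using max_iter_props lenF unfolding X_def T_def by metis
    have inE: "w \<in> E t" if t: "t \<in> {1..X}" for t
    proof -
      obtain c where "c \<in> Kset n F" "0 < dot F c w" "dot F c w \<le> real (length F) / real t"
        using key[of F w t n] t w(2) lenF unfolding X_def by auto
      then show ?thesis unfolding E_def K_def using w(1) lenF by (auto simp: dot_def)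
    qed
    have "ennreal (real X) = (\<Sum>t\<in>{1..X}. (1::ennreal))"
      by (simp add: ennreal_of_nat_eq_real_of_nat)
    also have "\<dots> = (\<Sum>t\<in>{1..X}. indicator (E t) w)"
      using inE by (intro sum.cong) auto
    also have "\<dots> \<le> (\<Sum>t\<in>{1..T}. indicator (E t) w)"
      using XT by (intro sum_mono2) auto
    finally show ?thesis unfolding X_def .
  qed
  have "(\<integral>\<^sup>+ w. ennreal (real (max_iter 1 n F w)) \<partial>P) \<le> (\<integral>\<^sup>+ w. (\<Sum>t\<in>{1..T}. indicator (E t) w) \<partial>P)"
  proof (rule nn_integral_mono_AE)
    show "AE w in P. ennreal (real (max_iter 1 n F w)) \<le> (\<Sum>t\<in>{1..T}. indicator (E t) w)"
      using AE01 AE_space[of P] unfolding P_def[symmetric] by eventually_elim (rule pw)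
  qed
  also have "\<dots> = (\<Sum>t\<in>{1..T}. emeasure P (E t))"
    using Emeas by (subst nn_integral_sum) auto
  also have "\<dots> \<le> (\<Sum>t\<in>{1..T}. of_nat (card K) * ennreal (\<phi> * (real m / real t)))"
    by (intro sum_mono Ebound)
  also have "\<dots> = (\<Sum>t\<in>{1..T}. ennreal (real (card K) * \<phi> * real m * (1 / real t)))"
    using phi by (intro sum.cong refl) (simp add: ennreal_of_nat_eq_real_of_nat ennreal_mult[symmetric])
  also have "\<dots> = ennreal (\<Sum>t\<in>{1..T}. real (card K) * \<phi> * real m * (1 / real t))"
    using phi by (intro sum_ennreal) auto
  also have "\<dots> = ennreal (real (card K) * \<phi> * real m * (\<Sum>t\<in>{1..T}. 1 / real t))"
    by (simp add: sum_distrib_left)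
  also have "\<dots> \<le> ennreal (4 * 2 ^ max_occ n F * real n * real m ^ 2 * \<phi>)"
  proof (rule ennreal_leI)
    have H: "(\<Sum>t\<in>{1..T}. 1 / real t) \<le> 2 * real m"
      using harm_dyadic[of m] mpos unfolding T_def by simp
    have H0: "0 \<le> (\<Sum>t\<in>{1..T}. 1 / real t)" by (intro sum_nonneg) auto
    have ck: "real (card K) \<le> 2 * 2 ^ max_occ n F * real n"
    proof -
      have "real (card K) \<le> real (2 * 2 ^ max_occ n F * n)" using cardK by (simp only: of_nat_le_iff)
      then show ?thesis by simp
    qed
    have "real (card K) * \<phi> * real m * (\<Sum>t\<in>{1..T}. 1 / real t)
          \<le> (2 * 2 ^ max_occ n F * real n) * \<phi> * real m * (2 * real m)"
      using phi H H0 ck by (intro mult_mono) auto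
    also have "\<dots> = 4 * 2 ^ max_occ n F * real n * real m ^ 2 * \<phi>"
      by (simp add: power2_eq_square algebra_simps)
    finally show "real (card K) * \<phi> * real m * (\<Sum>t\<in>{1..T}. 1 / real t) \<le> 4 * 2 ^ max_occ n F * real n * real m ^ 2 * \<phi>" .
  qed
  finally show ?thesis unfolding P_def .
qed

end


theorem mainTheorem9:
  "\<exists>c>0. \<forall>(n::nat) (F::cnf) (f::nat \<Rightarrow> real \<Rightarrow> real) (\<phi>::real).
     (\<forall>C \<in> set F. \<forall>(x, b) \<in> C. x < n) \<longrightarrow>
     (\<forall>i < length F. smoothed_density \<phi> (f i)) \<longrightarrow>
     (\<integral>\<^sup>+ w. ennreal (real (max_iter 1 n F w))
        \<partial>(PiM {..<length F} (\<lambda>i. density lborel (\<lambda>x. ennreal (f i x)))))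
     \<le> ennreal (c * 2 ^ max_occ n F * real n * real (length F) ^ 2 * \<phi>)"
proof (intro exI[of _ "4::real"] conjI allI impI)
  fix n :: nat and F :: cnf and f :: "nat \<Rightarrow> real \<Rightarrow> real" and \<phi> :: real
  assume d: "\<forall>i < length F. smoothed_density \<phi> (f i)"
  have e: "(\<lambda>i. density lborel (\<lambda>x. ennreal (f i x))) = MM f" by (rule ext) (simp add: MM_def[OF d])
  show "(\<integral>\<^sup>+ w. ennreal (real (max_iter 1 n F w))
        \<partial>(PiM {..<length F} (\<lambda>i. density lborel (\<lambda>x. ennreal (f i x)))))
     \<le> ennreal (4 * 2 ^ max_occ n F * real n * real (length F) ^ 2 * \<phi>)"
    unfolding e by (rule main_bound[OF d refl])
qed simp

end
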